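(* Let $\lambda=(\lambda_1,\dots,\lambda_d)$ be a partition of $n\ge2$ such that $\gcd(n-1,\lambda_t)=1$ for every $t$. Then for distinct $i,j\in\{1,\dots,n-2\}$, we have $i\preceq j$ in $P(\lambda)$ if and only if $i<j$ and $s_{t,i}>s_{t,j}>0$ for every $t\in\{1,\dots,d\}$.
   Context: $\Delta_\lambda=\mathrm{conv}(e_1,\dots,e_d,\lambda)\subset\mathbb{R}^d$, with fundamental parallelepiped $\Pi_\lambda=\{\sum_{i=1}^d\gamma_i(1,e_i)+\gamma_{d+1}(1,\lambda):0\le\gamma_i<1\}\subset\mathbb{R}^{d+1}$. $P(\lambda)$ is $\Pi_\lambda\cap\mathbb{Z}^{d+1}$ ordered by $\sigma\preceq\mu$ iff $\mu-\sigma\in\Pi_\lambda\cap\mathbb{Z}^{d+1}$. For $0\le b<n-1$ set $p(b)=\left(\sum_{t}\lceil b\lambda_t/(n-1)\rceil-b,\ \lceil b\lambda_1/(n-1)\rceil,\dots,\lceil b\lambda_d/(n-1)\rceil\right)$; $b\mapsto p(b)$ is a bijection from $\{0,\dots,n-2\}$ onto $\Pi_\lambda\cap\mathbb{Z}^{d+1}$ and each integer $b$ is identified with $p(b)$. For $0\le i<n-1$ and $1\le t\le d$, the integers $r_{t,i}\ge0$ and $0\le s_{t,i}<n-1$ are defined by $i\lambda_t=r_{t,i}(n-1)+s_{t,i}$. *)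

theory Defs
  imports Complex_Main
begin

text \<open>A partition of n: weakly decreasing list of positive parts summing to n.
  lam ! (t-1) is the part lambda_t, for t = 1..d with d = length lam.\<close>
definition is_partition :: "nat \<Rightarrow> nat list \<Rightarrow> bool" where
  "is_partition n lam \<longleftrightarrow> sorted (rev lam) \<and> (\<forall>x\<in>set lam. 0 < x) \<and> sum_list lam = n"

text \<open>Points of R^(d+1) are functions on coordinates 0..d (coordinate 0 is the
  leading one).  Membership in the fundamental parallelepiped Pi_lambda.\<close>
definition in_Pi :: "nat list \<Rightarrow> (nat \<Rightarrow> real) \<Rightarrow> bool" where
  "in_Pi lam x \<longleftrightarrow>
    (\<exists>g :: nat \<Rightarrow> real.
       (\<forall>k\<in>{1..length lam + 1}. 0 \<le> g k \<and> g k < 1) \<and>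
       x 0 = (\<Sum>k=1..length lam + 1. g k) \<and>
       (\<forall>t\<in>{1..length lam}. x t = g t + g (length lam + 1) * real (lam ! (t - 1))))"

definition pt :: "nat list \<Rightarrow> nat \<Rightarrow> nat \<Rightarrow> nat \<Rightarrow> int" where
  "pt lam n b k =
    (if k = 0 then (\<Sum>t=1..length lam. \<lceil>real b * real (lam ! (t - 1)) / real (n - 1)\<rceil>) - int b
     else if k \<le> length lam then \<lceil>real b * real (lam ! (k - 1)) / real (n - 1)\<rceil>
     else 0)"

text \<open>The order of P(lambda), transported to integers b via b \<mapsto> p(b):
  sigma \<preceq> mu iff mu - sigma lies in Pi_lambda \<inter> Z^(d+1).\<close>
definition P_le :: "nat list \<Rightarrow> nat \<Rightarrow> nat \<Rightarrow> nat \<Rightarrow> bool" where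
  "P_le lam n i j \<longleftrightarrow> in_Pi lam (\<lambda>k. real_of_int (pt lam n j k - pt lam n i k))"

definition s_rem :: "nat list \<Rightarrow> nat \<Rightarrow> nat \<Rightarrow> nat \<Rightarrow> nat" where
  "s_rem lam n t i = (i * lam ! (t - 1)) mod (n - 1)"

end

theory Submission
  imports Defs
begin

lemma ceil_char: "(0 \<le> real_of_int z - y \<and> real_of_int z - y < 1) \<longleftrightarrow> z = \<lceil>y\<rceil>"
proof
  assume "0 \<le> real_of_int z - y \<and> real_of_int z - y < 1"
  then show "z = \<lceil>y\<rceil>" by (intro ceiling_unique[symmetric]) auto
next
  assume "z = \<lceil>y\<rceil>"
  then show "0 \<le> real_of_int z - y \<and> real_of_int z - y < 1"
    using ceiling_correct[of y] by auto
qed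

lemma ceil_split:
  fixes N :: nat and q s :: int
  assumes "N > 0" "-int N < s" "s < int N"
  shows "\<lceil>(real_of_int (q * int N + s)) / real N\<rceil> = q + (if s > 0 then 1 else 0)"
proof (rule ceiling_unique)
  have e: "real_of_int (q * int N + s) / real N = real_of_int q + real_of_int s / real N"
    using assms by (simp add: field_simps)
  have a: "real_of_int s / real N < 1" "real_of_int s / real N > -1" using assms
    by (simp_all add: divide_simps)
  have b: "s > 0 \<Longrightarrow> real_of_int s / real N > 0" "s \<le> 0 \<Longrightarrow> real_of_int s / real N \<le> 0"
    using assms by (simp_all add: divide_simps)
  show "real_of_int (q + (if s > 0 then 1 else 0)) - 1 < real_of_int (q * int N + s) / real N"
    using e a b by (cases "s > 0") auto
  show "real_of_int (q * int N + s) / real N \<le> real_of_int (q + (if s > 0 then 1 else 0))"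
    using e a b by (cases "s > 0") auto
qed

lemma key:
  fixes N a i j :: nat
  assumes N: "N > 0" and ij: "i < j" and si: "0 < i * a mod N" and sj: "0 < j * a mod N"
    and ne: "j * a mod N \<noteq> i * a mod N"
  shows "(\<lceil>real j * real a / real N\<rceil> - \<lceil>real i * real a / real N\<rceil>
          = \<lceil>(real j - real i) * real a / real N\<rceil>) \<longleftrightarrow> j * a mod N < i * a mod N"
proof -
  define ri where "ri = int (i * a div N)"
  define rj where "rj = int (j * a div N)"
  define si' where "si' = int (i * a mod N)"
  define sj' where "sj' = int (j * a mod N)"
  have ei: "int (i * a) = ri * int N + si'" unfolding ri_def si'_def
    by (metis div_mult_mod_eq of_nat_add of_nat_mult)
  have ej: "int (j * a) = rj * int N + sj'" unfolding rj_def sj'_def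
    by (metis div_mult_mod_eq of_nat_add of_nat_mult)
  have bi: "0 < si'" "si' < int N" using si N unfolding si'_def by auto
  have bj: "0 < sj'" "sj' < int N" using sj N unfolding sj'_def by auto
  have ci: "\<lceil>real i * real a / real N\<rceil> = ri + 1"
  proof -
    have "real i * real a = real_of_int (ri * int N + si')"
      by (metis ei of_int_of_nat_eq of_nat_mult)
    then show ?thesis using ceil_split[of N si' ri] N bi by simp
  qed
  have cj: "\<lceil>real j * real a / real N\<rceil> = rj + 1"
  proof -
    have "real j * real a = real_of_int (rj * int N + sj')"
      by (metis ej of_int_of_nat_eq of_nat_mult)
    then show ?thesis using ceil_split[of N sj' rj] N bj by simp
  qed
  have cd: "\<lceil>(real j - real i) * real a / real N\<rceil> = (rj - ri) + (if sj' - si' > 0 then 1 else 0)"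
  proof -
    have "(real j - real i) * real a = real_of_int ((rj - ri) * int N + (sj' - si'))"
    proof -
      have "(real j - real i) * real a = real (j*a) - real (i*a)" by (simp add: algebra_simps)
      also have "\<dots> = real_of_int (int (j*a) - int (i*a))" by simp
      also have "\<dots> = real_of_int ((rj - ri) * int N + (sj' - si'))" using ei ej
        by (simp add: algebra_simps)
      finally show ?thesis .
    qed
    then show ?thesis using ceil_split[of N "sj' - si'" "rj - ri"] N bi bj by simp
  qed
  show ?thesis using ci cj cd ne unfolding si'_def sj'_def by auto
qed


lemma sum_shift1: "(\<Sum>t=1..(d::nat). f (t - 1)) = (\<Sum>t<d. (f t :: real))"
  by (induction d) (auto simp: atLeastAtMostSuc_conv)

lemma rem_pos:
  fixes N a b :: nat
  assumes "coprime N a" "0 < b" "b < N"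
  shows "0 < b * a mod N"
proof (rule ccontr)
  assume "\<not> 0 < b * a mod N"
  then have "N dvd b * a" by auto
  then have "N dvd b" using assms(1) by (simp add: coprime_dvd_mult_left_iff)
  then show False using assms(2,3) by (auto dest: dvd_imp_le)
qed

lemma rem_ne:
  fixes N a i j :: nat
  assumes "coprime N a" "i < j" "j < N"
  shows "j * a mod N \<noteq> i * a mod N"
proof
  assume "j * a mod N = i * a mod N"
  then have "N dvd j * a - i * a" using assms(2)
    by (metis mod_eq_dvd_iff_nat less_imp_le mult_le_mono1)
  then have "N dvd (j - i) * a" by (simp add: diff_mult_distrib)
  then have "N dvd j - i" using assms(1) by (simp add: coprime_dvd_mult_left_iff)
  then show False using assms(2,3) by (auto dest: dvd_imp_le)
qed

theorem corollary2p18: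
  fixes n :: nat and lam :: "nat list" and i j :: nat
  assumes "n \<ge> 2"
    and "is_partition n lam"
    and "\<forall>t\<in>{1..length lam}. gcd (n - 1) (lam ! (t - 1)) = 1"
    and "i \<in> {1..n-2}" and "j \<in> {1..n-2}" and "i \<noteq> j"
  shows "P_le lam n i j \<longleftrightarrow>
    (i < j \<and> (\<forall>t\<in>{1..length lam}. s_rem lam n t i > s_rem lam n t j \<and> s_rem lam n t j > 0))"
proof -
  define N where "N = n - 1"
  define d where "d = length lam"
  define L where "L t = real (lam ! (t - 1))" for t
  define x where "x k = real_of_int (pt lam n j k - pt lam n i k)" for k
  define C where "C b t = \<lceil>real b * real (lam ! (t - 1)) / real (n - 1)\<rceil>" for b t
  have N0: "N > 0" and nN: "real n = real N + 1" using assms(1) unfolding N_def by auto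
  have iN: "0 < i" "i < N" and jN: "0 < j" "j < N" using assms(4,5) unfolding N_def by auto
  have cop: "coprime N (lam ! (t - 1))" if "t \<in> {1..d}" for t
    using assms(3) that unfolding N_def d_def by (simp add: coprime_iff_gcd_eq_1)
  have sumL: "(\<Sum>t=1..d. L t) = real n"
  proof -
    have "(\<Sum>t=1..d. L t) = (\<Sum>t<d. real (lam ! t))"
      unfolding L_def using sum_shift1[of "\<lambda>t. real (lam ! t)" d] by simp
    also have "\<dots> = real (sum_list lam)"
      unfolding d_def by (simp add: sum_list_sum_nth atLeast0LessThan)
    finally show ?thesis using assms(2) unfolding is_partition_def by simp
  qed
  have xt: "x t = real_of_int (C j t - C i t)" if "t \<in> {1..d}" for t
    using that unfolding x_def C_def pt_def d_def by auto
  have x0: "x 0 = (\<Sum>t=1..d. x t) - (real j - real i)"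
  proof -
    have "(\<Sum>t=1..d. x t) = (\<Sum>t=1..d. real_of_int (C j t) - real_of_int (C i t))"
      using xt by (intro sum.cong) auto
    also have "\<dots> = (\<Sum>t=1..d. real_of_int (C j t)) - (\<Sum>t=1..d. real_of_int (C i t))"
      by (simp add: sum_subtractf)
    finally show ?thesis unfolding x_def pt_def C_def d_def by simp
  qed
  have keyt: "(x t = real_of_int \<lceil>(real j - real i) / real N * L t\<rceil>) \<longleftrightarrow>
      s_rem lam n t j < s_rem lam n t i" if "t \<in> {1..d}" "i < j" for t
  proof -
    have "(x t = real_of_int \<lceil>(real j - real i) / real N * L t\<rceil>) \<longleftrightarrow>
       (C j t - C i t = \<lceil>(real j - real i) * real (lam ! (t - 1)) / real N\<rceil>)"
    proof -
      have "(real j - real i) / real N * L t = (real j - real i) * real (lam ! (t - 1)) / real N"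
        unfolding L_def by simp
      then show ?thesis using xt[OF that(1)] by (metis of_int_eq_iff)
    qed
    also have "\<dots> \<longleftrightarrow> s_rem lam n t j < s_rem lam n t i"
      unfolding C_def s_rem_def N_def[symmetric]
      by (rule key[OF N0 that(2) rem_pos[OF cop[OF that(1)] iN] rem_pos[OF cop[OF that(1)] jN]
            rem_ne[OF cop[OF that(1)] that(2) jN(2)]])
    finally show ?thesis .
  qed
  have spos: "s_rem lam n t j > 0" if "t \<in> {1..d}" for t
    unfolding s_rem_def N_def[symmetric] using rem_pos[OF cop[OF that] jN] .
  have Pdef: "P_le lam n i j \<longleftrightarrow> (\<exists>g :: nat \<Rightarrow> real.
       (\<forall>k\<in>{1..d + 1}. 0 \<le> g k \<and> g k < 1) \<and>
       x 0 = (\<Sum>k=1..d + 1. g k) \<and>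
       (\<forall>t\<in>{1..d}. x t = g t + g (d + 1) * L t))"
    unfolding P_le_def in_Pi_def x_def d_def L_def by simp
  show ?thesis
  proof
    assume "P_le lam n i j"
    then obtain g where g1: "\<forall>k\<in>{1..d + 1}. 0 \<le> g k \<and> g k < 1"
      and g2: "x 0 = (\<Sum>k=1..d + 1. g k)" and g3: "\<forall>t\<in>{1..d}. x t = g t + g (d + 1) * L t"
      using Pdef by blast
    define c where "c = g (d + 1)"
    have "x 0 = (\<Sum>t=1..d. g t) + c" using g2 unfolding c_def by simp
    also have "(\<Sum>t=1..d. g t) = (\<Sum>t=1..d. x t - c * L t)"
      using g3 unfolding c_def by (intro sum.cong) auto
    also have "\<dots> = (\<Sum>t=1..d. x t) - c * real n"
      using sumL by (simp add: sum_subtractf sum_distrib_left[symmetric])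
    finally have "c * real N = real j - real i" using x0 nN by (simp add: algebra_simps)
    then have cdef: "c = (real j - real i) / real N" using N0 by (simp add: field_simps)
    have "0 \<le> c" using g1 unfolding c_def by auto
    then have ij: "i < j" using cdef N0 assms(6) by (simp add: divide_simps split: if_splits)
    have "s_rem lam n t j < s_rem lam n t i" if "t \<in> {1..d}" for t
    proof -
      have "0 \<le> g t \<and> g t < 1" using g1 that by auto
      moreover have "g t = x t - c * L t" using g3 that unfolding c_def by auto
      ultimately have "x t = real_of_int \<lceil>c * L t\<rceil>"
        using ceil_char[of "\<lceil>c * L t\<rceil>" "c * L t"] ceiling_correct[of "c * L t"]
        by (metis ceil_char of_int_of_nat_eq xt[OF that] add_diff_cancel_left' diff_add_cancel)
      then show ?thesis using keyt[OF that ij] cdef by simp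
    qed
    then show "i < j \<and> (\<forall>t\<in>{1..length lam}. s_rem lam n t i > s_rem lam n t j \<and> s_rem lam n t j > 0)"
      using ij spos unfolding d_def by auto
  next
    assume R: "i < j \<and> (\<forall>t\<in>{1..length lam}. s_rem lam n t i > s_rem lam n t j \<and> s_rem lam n t j > 0)"
    then have ij: "i < j" by simp
    define c where "c = (real j - real i) / real N"
    define g where "g k = (if k = d + 1 then c else x k - c * L k)" for k
    have c01: "0 \<le> c" "c < 1" using ij jN N0 unfolding c_def by (auto simp: divide_simps)
    have xc: "x t = real_of_int \<lceil>c * L t\<rceil>" if "t \<in> {1..d}" for t
      using keyt[OF that ij] R that unfolding c_def d_def by auto
    show "P_le lam n i j" unfolding Pdef
    proof (intro exI conjI ballI)
      fix k assume k: "k \<in> {1..d + 1}"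
      show "0 \<le> g k" "g k < 1"
      proof -
        have "0 \<le> g k \<and> g k < 1"
        proof (cases "k = d + 1")
          case True then show ?thesis using c01 unfolding g_def by simp
        next
          case False
          then have kk: "k \<in> {1..d}" using k by auto
          show ?thesis using False xc[OF kk] ceil_char[of "\<lceil>c * L k\<rceil>" "c * L k"]
            unfolding g_def by simp
        qed
        then show "0 \<le> g k" "g k < 1" by auto
      qed
    next
      have "(\<Sum>k=1..d + 1. g k) = (\<Sum>t=1..d. g t) + c" unfolding g_def by simp
      also have "(\<Sum>t=1..d. g t) = (\<Sum>t=1..d. x t - c * L t)"
        unfolding g_def by (intro sum.cong) auto
      also have "\<dots> = (\<Sum>t=1..d. x t) - c * real n"
        using sumL by (simp add: sum_subtractf sum_distrib_left[symmetric])
      finally have S: "(\<Sum>k=1..d + 1. g k) = (\<Sum>t=1..d. x t) - c * real n + c" .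
      have "c * real N = real j - real i" using N0 unfolding c_def by simp
      then have "c * real n - c = real j - real i" using nN by (simp add: algebra_simps)
      then show "x 0 = (\<Sum>k=1..d + 1. g k)" using S x0 by linarith
    next
      fix t assume "t \<in> {1..d}"
      then show "x t = g t + g (d + 1) * L t" unfolding g_def by simp
    qed
  qed
qed

end
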